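(* Let $T\in\mathbb{P}(Sym^d(\mathbb{C}^{n+1}))$ and let $A\subset\mathbb{P}^n$ be a minimal decomposition of $T$. Assume that $\ell(A)\le d$ and that $A$ does not contain an aligned (i.e. collinear) subset of cardinality $d/2$. Then $T$ has rank $\ell(A)$ and $T$ is identifiable.
   Context: All spaces are complex projective; $\ell(A)$ is the cardinality of $A$. The Veronese map $\nu_d:\mathbb{P}^n\to\mathbb{P}(Sym^d(\mathbb{C}^{n+1}))$ sends $[L]$ ($L$ a linear form) to $[L^d]$. A finite set $A$ is a decomposition of $T$ if $T\in\langle\nu_d(A)\rangle$; it is minimal if no proper subset of $A$ is a decomposition of $T$. The rank of $T$ is the minimal cardinality of a decomposition. $T$ of rank $r$ is identifiable if it has only one decomposition of cardinality $r$, up to scaling and permutation of summands. *)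

theory Defs
  imports Complex_Main
begin

text \<open>Vectors of C^{n+1} are functions 'n \<Rightarrow> complex for a finite index type 'n
 (so n+1 = CARD('n)). Tensors of order d are functions (nat \<Rightarrow> 'n) \<Rightarrow> complex,
 where only the values on {..<d} of the index function matter.\<close>

definition cspan :: "('a \<Rightarrow> complex) set \<Rightarrow> ('a \<Rightarrow> complex) set" where
  "cspan S = {x. \<exists>F c. finite F \<and> F \<subseteq> S \<and> (\<forall>i. x i = (\<Sum>v\<in>F. c v * v i))}"

definition proj_points :: "('n::finite \<Rightarrow> complex) set set" where
  "proj_points = {L. \<exists>v. v \<noteq> (\<lambda>_. 0) \<and> L = cspan {v}}"

text \<open>The d-th power L^d of a linear form, as a symmetric tensor.\<close>
definition ver :: "nat \<Rightarrow> ('n::finite \<Rightarrow> complex) \<Rightarrow> ((nat \<Rightarrow> 'n) \<Rightarrow> complex)" where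
  "ver d v = (\<lambda>f. \<Prod>i<d. v (f i))"

definition ver_span :: "nat \<Rightarrow> ('n::finite \<Rightarrow> complex) set set \<Rightarrow> ((nat \<Rightarrow> 'n) \<Rightarrow> complex) set" where
  "ver_span d A = cspan (\<Union>L\<in>A. ver d ` L)"

definition is_decomposition :: "nat \<Rightarrow> ((nat \<Rightarrow> 'n::finite) \<Rightarrow> complex) \<Rightarrow> ('n \<Rightarrow> complex) set set \<Rightarrow> bool" where
  "is_decomposition d T A \<longleftrightarrow> finite A \<and> A \<subseteq> proj_points \<and> T \<in> ver_span d A"

definition minimal_decomposition :: "nat \<Rightarrow> ((nat \<Rightarrow> 'n::finite) \<Rightarrow> complex) \<Rightarrow> ('n \<Rightarrow> complex) set set \<Rightarrow> bool" where
  "minimal_decomposition d T A \<longleftrightarrow> is_decomposition d T A \<and> (\<forall>B. B \<subset> A \<longrightarrow> \<not> is_decomposition d T B)"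

definition tensor_rank :: "nat \<Rightarrow> ((nat \<Rightarrow> 'n::finite) \<Rightarrow> complex) \<Rightarrow> nat" where
  "tensor_rank d T = (LEAST r. \<exists>A. is_decomposition d T A \<and> card A = r)"

definition identifiable :: "nat \<Rightarrow> ((nat \<Rightarrow> 'n::finite) \<Rightarrow> complex) \<Rightarrow> bool" where
  "identifiable d T \<longleftrightarrow> (\<exists>!A. is_decomposition d T A \<and> card A = tensor_rank d T)"

definition aligned :: "('n::finite \<Rightarrow> complex) set set \<Rightarrow> bool" where
  "aligned S \<longleftrightarrow> (\<exists>u w. \<forall>L\<in>S. L \<subseteq> cspan {u, w})"

end

theory Submission
  imports Defs "HOL-Library.FuncSet"
begin


definition gen :: "('n::finite \<Rightarrow> complex) set \<Rightarrow> ('n \<Rightarrow> complex)" where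
  "gen L = (SOME v. v \<noteq> (\<lambda>_. 0) \<and> L = cspan {v})"

definition in2 :: "('n \<Rightarrow> complex) \<Rightarrow> ('n \<Rightarrow> complex) \<Rightarrow> ('n \<Rightarrow> complex) \<Rightarrow> bool" where
  "in2 x y z \<longleftrightarrow> (\<exists>a b. z = (\<lambda>i. a * x i + b * y i))"

definition lf :: "('n::finite \<Rightarrow> complex) \<Rightarrow> ('n \<Rightarrow> complex) \<Rightarrow> complex" where
  "lf w v = (\<Sum>j\<in>UNIV. w j * v j)"

definition lin :: "('n \<Rightarrow> complex) set \<Rightarrow> ('n \<Rightarrow> complex) \<Rightarrow> bool" where
  "lin S x \<longleftrightarrow> (\<exists>c. x = (\<lambda>i. \<Sum>v\<in>S. c v * v i))"

lemma cspan_single: "cspan {v} = range (\<lambda>a. (\<lambda>i. a * v i))"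
proof
  show "cspan {v} \<subseteq> range (\<lambda>a i. a * v i)"
  proof
    fix x assume "x \<in> cspan {v}"
    then obtain F c where F: "finite F" "F \<subseteq> {v}" "\<forall>i. x i = (\<Sum>u\<in>F. c u * u i)"
      unfolding cspan_def by blast
    have "F = {} \<or> F = {v}" using F(2) by blast
    then show "x \<in> range (\<lambda>a i. a * v i)"
    proof
      assume "F = {}" then have x0: "x = (\<lambda>i. 0 * v i)" using F(3) by auto
      show ?thesis unfolding x0 by (rule rangeI)
    next
      assume "F = {v}" then have x0: "x = (\<lambda>i. c v * v i)" using F(3) by auto
      show ?thesis unfolding x0 by (rule rangeI)
    qed
  qed
next
  show "range (\<lambda>a i. a * v i) \<subseteq> cspan {v}"
  proof
    fix x assume "x \<in> range (\<lambda>a i. a * v i)"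
    then obtain a where "x = (\<lambda>i. a * v i)" by blast
    then have "\<forall>i. x i = (\<Sum>u\<in>{v}. (\<lambda>_. a) u * u i)" by simp
    then show "x \<in> cspan {v}" unfolding cspan_def by (intro CollectI exI[of _ "{v}"] exI[of _ "\<lambda>_. a"]) simp
  qed
qed

lemma gen_props:
  assumes "L \<in> proj_points"
  shows "gen L \<noteq> (\<lambda>_. 0)" "L = cspan {gen L}"
proof -
  have "\<exists>v. v \<noteq> (\<lambda>_. 0) \<and> L = cspan {v}" using assms unfolding proj_points_def by blast
  then have "gen L \<noteq> (\<lambda>_. 0) \<and> L = cspan {gen L}" unfolding gen_def by (rule someI_ex)
  then show "gen L \<noteq> (\<lambda>_. 0)" "L = cspan {gen L}" by auto
qed

lemma gen_range:
  assumes "L \<in> proj_points"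
  shows "L = range (\<lambda>a. (\<lambda>i. a * gen L i))"
  using gen_props[OF assms] cspan_single by metis

lemma gen_in:
  assumes "L \<in> proj_points"
  shows "gen L \<in> L"
proof -
  have "gen L = (\<lambda>i. 1 * gen L i)" by simp
  then have "gen L \<in> range (\<lambda>a. (\<lambda>i. a * gen L i))" by (rule range_eqI)
  then show ?thesis using gen_range[OF assms] by simp
qed

lemma gen_mult_eq:
  assumes "L1 \<in> proj_points" "L2 \<in> proj_points" "gen L1 = (\<lambda>i. a * gen L2 i)"
  shows "L1 = L2"
proof -
  have a: "a \<noteq> 0" using gen_props(1)[OF assms(1)] assms(3) by auto
  have "L1 = range (\<lambda>b. (\<lambda>i. b * (a * gen L2 i)))" using gen_range[OF assms(1)] assms(3) by simp
  also have "\<dots> = range (\<lambda>b. (\<lambda>i. b * gen L2 i))"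
  proof
    show "range (\<lambda>b i. b * (a * gen L2 i)) \<subseteq> range (\<lambda>b i. b * gen L2 i)"
    proof
      fix x assume "x \<in> range (\<lambda>b i. b * (a * gen L2 i))"
      then obtain b where "x = (\<lambda>i. b * (a * gen L2 i))" by blast
      then have x0: "x = (\<lambda>i. (b * a) * gen L2 i)" by (simp add: mult.assoc)
      show "x \<in> range (\<lambda>b i. b * gen L2 i)" unfolding x0 by (rule rangeI)
    qed
    show "range (\<lambda>b i. b * gen L2 i) \<subseteq> range (\<lambda>b i. b * (a * gen L2 i))"
    proof
      fix x assume "x \<in> range (\<lambda>b i. b * gen L2 i)"
      then obtain b where "x = (\<lambda>i. b * gen L2 i)" by blast
      then have x0: "x = (\<lambda>i. (b / a) * (a * gen L2 i))" using a by auto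
      show "x \<in> range (\<lambda>b i. b * (a * gen L2 i))" unfolding x0 by (rule rangeI)
    qed
  qed
  also have "\<dots> = L2" using gen_range[OF assms(2)] by simp
  finally show ?thesis .
qed

lemma cspan_sum:
  assumes "finite I" "\<forall>i\<in>I. g i \<in> S"
  shows "(\<lambda>x. \<Sum>i\<in>I. c i * g i x) \<in> cspan S"
proof -
  define c' where "c' v = (\<Sum>i\<in>{i\<in>I. g i = v}. c i)" for v
  have "\<forall>x. (\<Sum>i\<in>I. c i * g i x) = (\<Sum>v\<in>g ` I. c' v * v x)"
  proof
    fix x
    have "(\<Sum>i\<in>I. c i * g i x) = (\<Sum>v\<in>g ` I. \<Sum>i\<in>{i\<in>I. g i = v}. c i * g i x)"
      using assms(1) by (rule sum.image_gen)
    also have "\<dots> = (\<Sum>v\<in>g ` I. c' v * v x)"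
      unfolding c'_def sum_distrib_right by (intro sum.cong) auto
    finally show "(\<Sum>i\<in>I. c i * g i x) = (\<Sum>v\<in>g ` I. c' v * v x)" .
  qed
  moreover have "finite (g ` I)" "g ` I \<subseteq> S" using assms by auto
  ultimately show ?thesis unfolding cspan_def by blast
qed



lemma ver_scale: "ver d (\<lambda>i. a * v i) = (\<lambda>f. a ^ d * ver d v f)"
  by (simp add: ver_def prod.distrib)

lemma normal_form:
  assumes "finite A" "A \<subseteq> proj_points" "T \<in> ver_span d A"
  shows "\<exists>c. T = (\<lambda>f. \<Sum>L\<in>A. c L * ver d (gen L) f)"
proof -
  obtain F cc where F: "finite F" "F \<subseteq> (\<Union>L\<in>A. ver d ` L)" "\<forall>f. T f = (\<Sum>v\<in>F. cc v * v f)"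
    using assms(3) unfolding ver_span_def cspan_def by blast
  have "\<forall>v\<in>F. \<exists>cv. v = (\<lambda>f. \<Sum>L\<in>A. cv L * ver d (gen L) f)"
  proof
    fix v assume "v \<in> F"
    then obtain L u where L: "L \<in> A" "u \<in> L" "v = ver d u" using F(2) by blast
    then have "L \<in> proj_points" using assms(2) by blast
    then obtain a where u: "u = (\<lambda>i. a * gen L i)" using gen_range L(2) by blast
    have v0: "v = (\<lambda>f. \<Sum>M\<in>A. (if M = L then a ^ d else 0) * ver d (gen M) f)"
    proof
      fix f
      have "(\<Sum>M\<in>A. (if M = L then a ^ d else 0) * ver d (gen M) f)
          = (\<Sum>M\<in>A. (if M = L then a ^ d * ver d (gen M) f else 0))"
        by (intro sum.cong) auto
      also have "\<dots> = a ^ d * ver d (gen L) f" using L(1) assms(1) by (simp add: sum.delta)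
      finally show "v f = (\<Sum>M\<in>A. (if M = L then a ^ d else 0) * ver d (gen M) f)"
        by (simp add: L(3) u ver_scale)
    qed
    show "\<exists>cv. v = (\<lambda>f. \<Sum>L\<in>A. cv L * ver d (gen L) f)"
      by (rule exI[of _ "\<lambda>M. if M = L then a ^ d else 0"]) (rule v0)
  qed
  then obtain cv where cv: "\<forall>v\<in>F. v = (\<lambda>f. \<Sum>L\<in>A. cv v L * ver d (gen L) f)"
    by metis
  have Tn: "T = (\<lambda>f. \<Sum>L\<in>A. (\<Sum>v\<in>F. cc v * cv v L) * ver d (gen L) f)"
  proof
    fix f
    have "T f = (\<Sum>v\<in>F. cc v * (\<Sum>L\<in>A. cv v L * ver d (gen L) f))"
      using F(3) cv by (metis (no_types, lifting) sum.cong)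
    also have "\<dots> = (\<Sum>L\<in>A. (\<Sum>v\<in>F. cc v * cv v L) * ver d (gen L) f)"
      by (simp add: sum_distrib_left sum_distrib_right mult.assoc sum.swap[of _ F])
    finally show "T f = (\<Sum>L\<in>A. (\<Sum>v\<in>F. cc v * cv v L) * ver d (gen L) f)" .
  qed
  show ?thesis by (rule exI[of _ "\<lambda>L. \<Sum>v\<in>F. cc v * cv v L"]) (rule Tn)
qed

lemma sum_in_ver_span:
  assumes "A \<subseteq> proj_points" "finite A"
  shows "(\<lambda>f. \<Sum>L\<in>A. c L * ver d (gen L) f) \<in> ver_span d A"
  unfolding ver_span_def
proof (rule cspan_sum[OF assms(2)])
  show "\<forall>i\<in>A. ver d (gen i) \<in> (\<Union>L\<in>A. ver d ` L)"
    using gen_in assms(1) by blast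
qed

lemma coef_nonzero:
  assumes "minimal_decomposition d T A" "T = (\<lambda>f. \<Sum>L\<in>A. c L * ver d (gen L) f)" "L0 \<in> A"
  shows "c L0 \<noteq> 0"
proof
  assume c0: "c L0 = 0"
  have fin: "finite A" and pp: "A \<subseteq> proj_points"
    using assms(1) unfolding minimal_decomposition_def is_decomposition_def by auto
  have "T = (\<lambda>f. \<Sum>L\<in>A - {L0}. c L * ver d (gen L) f)"
    using assms(2) by (simp add: sum.remove[OF fin assms(3)] c0)
  moreover have "(\<lambda>f. \<Sum>L\<in>A - {L0}. c L * ver d (gen L) f) \<in> ver_span d (A - {L0})"
    using pp fin by (intro sum_in_ver_span) auto
  ultimately have "is_decomposition d T (A - {L0})"
    using pp fin unfolding is_decomposition_def by auto
  moreover have "A - {L0} \<subset> A" using assms(3) by blast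
  ultimately show False using assms(1) unfolding minimal_decomposition_def by blast
qed

lemma exmin:
  assumes "is_decomposition d T B"
  shows "\<exists>B'\<subseteq>B. minimal_decomposition d T B'"
  using assms
proof (induction "card B" arbitrary: B rule: less_induct)
  case less
  show ?case
  proof (cases "minimal_decomposition d T B")
    case True then show ?thesis by blast
  next
    case False
    then obtain B'' where B'': "B'' \<subset> B" "is_decomposition d T B''"
      using less.prems unfolding minimal_decomposition_def by blast
    have "finite B" using less.prems unfolding is_decomposition_def by auto
    then have "card B'' < card B" using B''(1) by (rule psubset_card_mono)
    then obtain B' where "B' \<subseteq> B''" "minimal_decomposition d T B'"
      using less.hyps B''(2) by blast
    then show ?thesis using B''(1) by blast
  qed
qed

definition phi :: "nat \<Rightarrow> (nat \<Rightarrow> 'n::finite \<Rightarrow> complex) \<Rightarrow> ((nat \<Rightarrow> 'n) \<Rightarrow> complex) \<Rightarrow> complex" where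
  "phi d W T = (\<Sum>f\<in>PiE {..<d} (\<lambda>_. UNIV). T f * (\<Prod>i<d. W i (f i)))"

lemma phi_ver: "phi d W (ver d v) = (\<Prod>i<d. lf (W i) v)"
proof -
  have "phi d W (ver d v) = (\<Sum>f\<in>PiE {..<d} (\<lambda>_. UNIV). \<Prod>i<d. W i (f i) * v (f i))"
    unfolding phi_def ver_def by (simp add: prod.distrib mult.commute)
  also have "\<dots> = (\<Prod>i<d. \<Sum>j\<in>UNIV. W i j * v j)"
    by (rule prod_sum_PiE[symmetric]) auto
  finally show ?thesis unfolding lf_def .
qed

lemma phi_sum: "phi d W (\<lambda>f. \<Sum>L\<in>A. c L * h L f) = (\<Sum>L\<in>A. c L * phi d W (h L))"
  unfolding phi_def
  by (simp add: sum_distrib_left sum_distrib_right mult.assoc sum.swap[of _ A])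



lemma lin_empty: "lin {} x \<longleftrightarrow> x = (\<lambda>i. 0)"
  unfolding lin_def by simp

lemma lin_add:
  assumes "finite S" "s \<notin> S" "lin S y"
  shows "lin (insert s S) (\<lambda>i. y i + t * s i)"
proof -
  obtain c where c: "y = (\<lambda>i. \<Sum>v\<in>S. c v * v i)" using assms(3) unfolding lin_def by blast
  have "(\<lambda>i. y i + t * s i) = (\<lambda>i. \<Sum>v\<in>insert s S. (c(s := t)) v * v i)"
  proof
    fix i
    have "(\<Sum>v\<in>S. (c(s := t)) v * v i) = (\<Sum>v\<in>S. c v * v i)"
      using assms(2) by (intro sum.cong) auto
    then show "y i + t * s i = (\<Sum>v\<in>insert s S. (c(s := t)) v * v i)"
      using assms(1,2) c by simp
  qed
  then show ?thesis unfolding lin_def by blast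
qed

lemma lin_insert:
  assumes "finite S" "s \<notin> S" "lin S y"
  shows "lin (insert s S) y"
  using lin_add[OF assms, of 0] by simp

lemma lf_lin:
  assumes "\<forall>v\<in>S. lf w v = 0" "lin S x"
  shows "lf w x = 0"
proof -
  obtain c where c: "x = (\<lambda>i. \<Sum>v\<in>S. c v * v i)" using assms(2) unfolding lin_def by blast
  have "lf w x = (\<Sum>v\<in>S. c v * lf w v)"
    unfolding c lf_def by (simp add: sum_distrib_left sum_distrib_right mult.assoc mult.left_commute sum.swap[of _ S])
  also have "\<dots> = 0" using assms(1) by simp
  finally show ?thesis .
qed

lemma lf_diff_w: "lf (\<lambda>j. w3 j - k * w2 j) v = lf w3 v - k * lf w2 v"
  unfolding lf_def by (simp add: algebra_simps sum_subtractf sum_distrib_left)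

lemma lf_diff_v: "lf w (\<lambda>i. x i - t * s i) = lf w x - t * lf w s"
  unfolding lf_def by (simp add: algebra_simps sum_subtractf sum_distrib_left)

lemma SEP:
  assumes "finite S" "\<not> lin S x"
  shows "\<exists>w. (\<forall>s\<in>S. lf w s = 0) \<and> lf w x \<noteq> 0"
  using assms
proof (induction S arbitrary: x rule: finite_induct)
  case empty
  then have "x \<noteq> (\<lambda>i. 0)" by (simp add: lin_empty)
  then obtain j where j: "x j \<noteq> 0" by auto
  have e: "lf (\<lambda>i. if i = j then 1 else 0) x = x j"
  proof -
    have "lf (\<lambda>i. if i = j then 1 else 0) x = (\<Sum>i\<in>UNIV. if i = j then x i else 0)"
      unfolding lf_def by (intro sum.cong) auto
    then show ?thesis by simp
  qed
  show ?case apply (rule exI[of _ "\<lambda>i. if i = j then 1 else 0"]) using j e by simp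
next
  case (insert s S)
  have nx: "\<not> lin S x" using insert lin_insert by blast
  show ?case
  proof (cases "lin S s")
    case True
    obtain w where w: "\<forall>v\<in>S. lf w v = 0" "lf w x \<noteq> 0" using insert.IH nx by blast
    have "lf w s = 0" using lf_lin[OF w(1) True] .
    then show ?thesis apply - apply (rule exI[of _ w]) using w by simp
  next
    case False
    obtain w2 where w2: "\<forall>v\<in>S. lf w2 v = 0" "lf w2 s \<noteq> 0" using insert.IH False by blast
    define t where "t = lf w2 x / lf w2 s"
    define y where "y = (\<lambda>i. x i - t * s i)"
    have ny: "\<not> lin S y"
    proof
      assume "lin S y"
      then have "lin (insert s S) (\<lambda>i. y i + t * s i)" using lin_add insert.hyps by blast
      moreover have "(\<lambda>i. y i + t * s i) = x" unfolding y_def by simp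
      ultimately show False using insert.prems by simp
    qed
    obtain w3 where w3: "\<forall>v\<in>S. lf w3 v = 0" "lf w3 y \<noteq> 0" using insert.IH ny by blast
    define k where "k = lf w3 s / lf w2 s"
    define w where "w = (\<lambda>j. w3 j - k * w2 j)"
    have "\<forall>v\<in>insert s S. lf w v = 0"
      using w2 w3 unfolding w_def lf_diff_w k_def by auto
    moreover have "lf w x = lf w3 y"
      unfolding w_def lf_diff_w y_def lf_diff_v k_def t_def using w2(2) by (simp add: field_simps)
    ultimately show ?thesis apply - apply (rule exI[of _ w]) using w3(2) by simp
  qed
qed



lemma in2_2: "in2 x y y"
  unfolding in2_def by (rule exI[of _ 0], rule exI[of _ 1]) simp

lemma in2_1: "in2 x y x"
  unfolding in2_def by (rule exI[of _ 1], rule exI[of _ 0]) simp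

lemma in2_sym:
  assumes "in2 x y z" "\<not> (\<exists>a. z = (\<lambda>i. a * x i))"
  shows "in2 x z y"
proof -
  obtain a b where z: "z = (\<lambda>i. a * x i + b * y i)" using assms(1) unfolding in2_def by blast
  have b: "b \<noteq> 0"
  proof
    assume "b = 0" then have "z = (\<lambda>i. a * x i)" using z by simp
    then show False using assms(2) by blast
  qed
  have "y = (\<lambda>i. (- a / b) * x i + (1 / b) * z i)"
    using b unfolding z by (simp add: field_simps)
  then show ?thesis unfolding in2_def by blast
qed

lemma in2_trans:
  assumes "in2 x y z" "in2 x z s"
  shows "in2 x y s"
proof -
  obtain a b where z: "z = (\<lambda>i. a * x i + b * y i)" using assms(1) unfolding in2_def by blast
  obtain a' b' where s: "s = (\<lambda>i. a' * x i + b' * z i)" using assms(2) unfolding in2_def by blast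
  have "s = (\<lambda>i. (a' + b' * a) * x i + (b' * b) * y i)"
    unfolding s z by (simp add: algebra_simps)
  then show ?thesis unfolding in2_def by blast
qed

lemma in2_sub:
  assumes "in2 u w r1" "in2 u w r2" "in2 r1 r2 x"
  shows "in2 u w x"
proof -
  obtain a b where r1: "r1 = (\<lambda>i. a * u i + b * w i)" using assms(1) unfolding in2_def by blast
  obtain a' b' where r2: "r2 = (\<lambda>i. a' * u i + b' * w i)" using assms(2) unfolding in2_def by blast
  obtain c e where x: "x = (\<lambda>i. c * r1 i + e * r2 i)" using assms(3) unfolding in2_def by blast
  have "x = (\<lambda>i. (c * a + e * a') * u i + (c * b + e * b') * w i)"
    unfolding x r1 r2 by (simp add: algebra_simps)
  then show ?thesis unfolding in2_def by blast
qed

lemma in2_two: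
  assumes "in2 x y r1" "in2 x y r2" "r1 \<noteq> (\<lambda>_. 0)" "\<not> (\<exists>a. r2 = (\<lambda>i. a * r1 i))"
  shows "in2 r1 r2 x"
proof -
  obtain a1 b1 where r1: "r1 = (\<lambda>i. a1 * x i + b1 * y i)" using assms(1) unfolding in2_def by blast
  obtain a2 b2 where r2: "r2 = (\<lambda>i. a2 * x i + b2 * y i)" using assms(2) unfolding in2_def by blast
  define D where "D = a1 * b2 - a2 * b1"
  show ?thesis
  proof (cases "D = 0")
    case False
    have "x = (\<lambda>i. (b2 / D) * r1 i + (- b1 / D) * r2 i)"
    proof
      fix i
      have "b2 * r1 i - b1 * r2 i = D * x i" unfolding r1 r2 D_def by (simp add: algebra_simps)
      then show "x i = (b2 / D) * r1 i + (- b1 / D) * r2 i"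
        using False by (simp add: field_simps)
    qed
    then show ?thesis unfolding in2_def by blast
  next
    case True
    have e1: "\<forall>i. b2 * r1 i = b1 * r2 i"
      using True unfolding r1 r2 D_def by (auto simp: algebra_simps)
    have e2: "\<forall>i. a2 * r1 i = a1 * r2 i"
      using True unfolding r1 r2 D_def by (auto simp: algebra_simps)
    show ?thesis
    proof (cases "b1 = 0")
      case False
      have "r2 = (\<lambda>i. (b2 / b1) * r1 i)" using e1 False by (auto simp: field_simps)
      then show ?thesis using assms(4) by blast
    next
      case b1: True
      show ?thesis
      proof (cases "a1 = 0")
        case False
        have "r2 = (\<lambda>i. (a2 / a1) * r1 i)" using e2 False by (auto simp: field_simps)
        then show ?thesis using assms(4) by blast
      next
        case True
        then have "r1 = (\<lambda>_. 0)" unfolding r1 using b1 by simp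
        then show ?thesis using assms(3) by blast
      qed
    qed
  qed
qed



lemma argmax_nat:
  fixes f :: "'a \<Rightarrow> nat"
  assumes "finite P" "P \<noteq> {}"
  shows "\<exists>q\<in>P. \<forall>r\<in>P. f r \<le> f q"
proof -
  have "Max (f ` P) \<in> f ` P" using assms by (intro Max_in) auto
  then obtain q where "q \<in> P" "f q = Max (f ` P)" by auto
  moreover have "\<forall>r\<in>P. f r \<le> Max (f ` P)" using assms by auto
  ultimately show ?thesis by metis
qed

lemma comb:
  fixes P :: "'a set" and R :: "'a \<Rightarrow> 'a \<Rightarrow> bool"
  assumes "finite P"
    and "\<forall>q\<in>P. R q q"
    and "\<forall>q\<in>P. \<forall>r\<in>P. R q r \<longrightarrow> R r q"
    and "\<forall>q\<in>P. \<forall>r\<in>P. \<forall>s\<in>P. R q r \<longrightarrow> R r s \<longrightarrow> R q s"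
    and "card P \<le> 2 * k"
    and "\<forall>q\<in>P. card {r\<in>P. R q r} \<le> k"
  shows "\<exists>g. (\<forall>q\<in>P. g q < k) \<and> (\<forall>i. card {q\<in>P. g q = i} \<le> 2)
            \<and> (\<forall>q\<in>P. \<forall>r\<in>P. q \<noteq> r \<longrightarrow> g q = g r \<longrightarrow> \<not> R q r)"
  using assms
proof (induction k arbitrary: P)
  case 0
  have "P = {}" using "0.prems"(1,5) by simp
  then show ?case by (intro exI[of _ "\<lambda>_. 0"]) auto
next
  case (Suc m)
  note fin = Suc.prems(1) and rfl = Suc.prems(2) and sym = Suc.prems(3) and tr = Suc.prems(4)
  note cP = Suc.prems(5) and cC = Suc.prems(6)
  have symR: "\<And>a b. a \<in> P \<Longrightarrow> b \<in> P \<Longrightarrow> R a b \<Longrightarrow> R b a" using sym by blast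
  have trR: "\<And>a b c. a \<in> P \<Longrightarrow> b \<in> P \<Longrightarrow> c \<in> P \<Longrightarrow> R a b \<Longrightarrow> R b c \<Longrightarrow> R a c"
    using tr by blast
  show ?case
  proof (cases "P = {}")
    case True
    then show ?thesis by (intro exI[of _ "\<lambda>_. 0"]) auto
  next
    case False
    obtain q where q: "q \<in> P" "\<forall>r\<in>P. card {t\<in>P. R r t} \<le> card {t\<in>P. R q t}"
      using argmax_nat[OF fin False, of "\<lambda>r. card {t\<in>P. R r t}"] by blast
    show ?thesis
    proof (cases "\<exists>r\<in>P. \<not> R q r")
      case True
      define P2 where "P2 = {r\<in>P. \<not> R q r}"
      have "finite P2" "P2 \<noteq> {}" using True fin unfolding P2_def by auto
      then obtain r where r: "r \<in> P2" "\<forall>s\<in>P2. card {t\<in>P. R s t} \<le> card {t\<in>P. R r t}"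
        using argmax_nat[of P2 "\<lambda>r. card {t\<in>P. R r t}"] by blast
      have rP: "r \<in> P" and nqr: "\<not> R q r" using r(1) unfolding P2_def by auto
      have nrq: "\<not> R r q" using nqr symR[OF rP q(1)] by blast
      have qr: "q \<noteq> r" using nqr rfl q(1) by blast
      define P' where "P' = P - {q, r}"
      have finP': "finite P'" using fin unfolding P'_def by auto
      have cardP': "card P' \<le> 2 * m"
      proof -
        have "card P' = card P - 2" unfolding P'_def using q(1) rP qr fin by (simp add: card_Diff_subset)
        then show ?thesis using cP by simp
      qed
      have cls: "\<forall>s\<in>P'. card {t\<in>P'. R s t} \<le> m"
      proof
        fix s assume sP': "s \<in> P'"
        then have sP: "s \<in> P" "s \<noteq> q" "s \<noteq> r" unfolding P'_def by auto
        define X where "X = {t\<in>P. R s t}"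
        have finX: "finite X" using fin unfolding X_def by auto
        have sub: "{t\<in>P'. R s t} \<subseteq> X - {q, r}" unfolding X_def P'_def by auto
        have cX: "card X \<le> Suc m" using cC sP(1) unfolding X_def by blast
        show "card {t\<in>P'. R s t} \<le> m"
        proof (cases "R s q \<or> R s r")
          case True
          then obtain z where z: "z \<in> X" "z \<in> {q, r}" using q(1) rP unfolding X_def by auto
          have "card {t\<in>P'. R s t} \<le> card (X - {z})" using sub z finX by (intro card_mono) auto
          also have "\<dots> = card X - 1" using z finX by simp
          finally show ?thesis using cX by simp
        next
          case False
          then have nsq: "\<not> R s q" and nsr: "\<not> R s r" by auto
          have nqs: "\<not> R q s" using nsq symR[OF q(1) sP(1)] by blast
          have nrs: "\<not> R r s" using nsr symR[OF rP sP(1)] by blast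
          have "s \<in> P2" using nqs sP(1) unfolding P2_def by auto
          then have c1: "card X \<le> card {t\<in>P. R r t}" using r(2) unfolding X_def by blast
          have c2: "card X \<le> card {t\<in>P. R q t}" using q(2) sP(1) unfolding X_def by blast
          have "card X \<le> m"
          proof (rule ccontr)
            assume "\<not> card X \<le> m"
            then have big: "card X \<ge> Suc m" by simp
            define Q where "Q = {t\<in>P. R q t}"
            define Rr where "Rr = {t\<in>P. R r t}"
            have d1: "Q \<inter> Rr = {}"
            proof (rule ccontr)
              assume "Q \<inter> Rr \<noteq> {}"
              then obtain t where t: "t \<in> P" "R q t" "R r t" unfolding Q_def Rr_def by auto
              have "R t r" using symR[OF rP t(1) t(3)] .
              then have "R q r" using trR[OF q(1) t(1) rP t(2)] by blast
              then show False using nqr by blast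
            qed
            have d2: "(Q \<union> Rr) \<inter> X = {}"
            proof (rule ccontr)
              assume "(Q \<union> Rr) \<inter> X \<noteq> {}"
              then obtain t where t: "t \<in> P" "R q t \<or> R r t" "R s t" unfolding Q_def Rr_def X_def by auto
              have "R t s" using symR[OF sP(1) t(1) t(3)] .
              then have "R q s \<or> R r s" using trR[OF q(1) t(1) sP(1)] trR[OF rP t(1) sP(1)] t(2) by blast
              then show False using nqs nrs by blast
            qed
            have fQ: "finite Q" "finite Rr" using fin unfolding Q_def Rr_def by auto
            have "card (Q \<union> Rr \<union> X) = card Q + card Rr + card X"
              using d1 d2 fQ finX by (simp add: card_Un_disjoint)
            moreover have "card (Q \<union> Rr \<union> X) \<le> card P"
              using fin unfolding Q_def Rr_def X_def by (intro card_mono) auto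
            moreover have "card Q \<ge> Suc m" "card Rr \<ge> Suc m"
              using big c1 c2 unfolding Q_def Rr_def by auto
            ultimately show False using big cP by simp
          qed
          moreover have "card {t\<in>P'. R s t} \<le> card X"
            using sub finX by (intro card_mono) auto
          ultimately show ?thesis by linarith
        qed
      qed
      obtain g' where g': "\<forall>q\<in>P'. g' q < m" "\<forall>i. card {q\<in>P'. g' q = i} \<le> 2"
          "\<forall>q\<in>P'. \<forall>r\<in>P'. q \<noteq> r \<longrightarrow> g' q = g' r \<longrightarrow> \<not> R q r"
      proof -
        have r': "\<forall>q\<in>P'. R q q" using rfl unfolding P'_def by auto
        have s': "\<forall>q\<in>P'. \<forall>r\<in>P'. R q r \<longrightarrow> R r q" using sym unfolding P'_def by auto
        have t': "\<forall>q\<in>P'. \<forall>r\<in>P'. \<forall>s\<in>P'. R q r \<longrightarrow> R r s \<longrightarrow> R q s"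
          using tr unfolding P'_def by auto
        show ?thesis using Suc.IH[OF finP' r' s' t' cardP' cls] that by blast
      qed
      define g where "g = g'(q := m, r := m)"
      have gP': "\<And>t. t \<in> P' \<Longrightarrow> g t = g' t" unfolding g_def P'_def by auto
      have gq: "g q = m" "g r = m" unfolding g_def by auto
      have Pdec: "\<And>t. t \<in> P \<Longrightarrow> t \<in> P' \<or> t = q \<or> t = r" unfolding P'_def by auto
      have A1: "\<forall>t\<in>P. g t < Suc m"
      proof
        fix t assume "t \<in> P"
        then show "g t < Suc m" using Pdec gP' gq g'(1) by (metis less_Suc_eq)
      qed
      moreover have "\<forall>i. card {t\<in>P. g t = i} \<le> 2"
      proof
        fix i
        show "card {t\<in>P. g t = i} \<le> 2"
        proof (cases "i = m")
          case True
          have "{t\<in>P. g t = i} \<subseteq> {q, r}"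
          proof
            fix t assume "t \<in> {t\<in>P. g t = i}"
            then show "t \<in> {q, r}" using Pdec gP' g'(1) True by (metis (mono_tags, lifting) insertCI less_irrefl mem_Collect_eq)
          qed
          then have "card {t\<in>P. g t = i} \<le> card {q, r}" by (intro card_mono) auto
          also have "\<dots> \<le> 2" by (simp add: card_insert_if)
          finally show ?thesis .
        next
          case False
          have "{t\<in>P. g t = i} \<subseteq> {t\<in>P'. g' t = i}"
          proof
            fix t assume "t \<in> {t\<in>P. g t = i}"
            then show "t \<in> {t\<in>P'. g' t = i}" using Pdec gP' gq False by (metis (mono_tags, lifting) mem_Collect_eq)
          qed
          then have "card {t\<in>P. g t = i} \<le> card {t\<in>P'. g' t = i}" using finP' by (intro card_mono) auto
          then show ?thesis using g'(2) by (meson le_trans)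
        qed
      qed
      moreover have "\<forall>t\<in>P. \<forall>u\<in>P. t \<noteq> u \<longrightarrow> g t = g u \<longrightarrow> \<not> R t u"
      proof (intro ballI impI)
        fix t u assume tu: "t \<in> P" "u \<in> P" "t \<noteq> u" "g t = g u"
        show "\<not> R t u"
        proof (cases "t \<in> P' \<and> u \<in> P'")
          case True
          then show ?thesis using g'(3) gP' tu by metis
        next
          case False
          have "t \<in> {q, r} \<and> u \<in> {q, r}"
          proof (rule ccontr)
            assume "\<not> (t \<in> {q, r} \<and> u \<in> {q, r})"
            then have "(t \<in> P' \<and> u \<in> {q,r}) \<or> (u \<in> P' \<and> t \<in> {q,r})" using False Pdec tu(1,2) by blast
            then show False using gP' gq g'(1) tu(4) by (metis insert_iff less_irrefl singletonD)
          qed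
          then show ?thesis using tu(3) nqr nrq by auto
        qed
      qed
      ultimately show ?thesis by (intro exI[of _ g]) blast
    next
      case False
      then have allR: "\<forall>t\<in>P. R q t" by blast
      define P' where "P' = P - {q}"
      have finP': "finite P'" using fin unfolding P'_def by auto
      have "card P \<le> Suc m"
      proof -
        have "P = {t\<in>P. R q t}" using allR by auto
        then show ?thesis using cC q(1) by metis
      qed
      then have cardP'1: "card P' \<le> m" unfolding P'_def using q(1) fin by simp
      then have cardP': "card P' \<le> 2 * m" by simp
      have cls: "\<forall>s\<in>P'. card {t\<in>P'. R s t} \<le> m"
      proof
        fix s assume "s \<in> P'"
        have "card {t\<in>P'. R s t} \<le> card P'" using finP' by (intro card_mono) auto
        then show "card {t\<in>P'. R s t} \<le> m" using cardP'1 by simp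
      qed
      obtain g' where g': "\<forall>q\<in>P'. g' q < m" "\<forall>i. card {q\<in>P'. g' q = i} \<le> 2"
          "\<forall>q\<in>P'. \<forall>r\<in>P'. q \<noteq> r \<longrightarrow> g' q = g' r \<longrightarrow> \<not> R q r"
      proof -
        have r': "\<forall>q\<in>P'. R q q" using rfl unfolding P'_def by auto
        have s': "\<forall>q\<in>P'. \<forall>r\<in>P'. R q r \<longrightarrow> R r q" using sym unfolding P'_def by auto
        have t': "\<forall>q\<in>P'. \<forall>r\<in>P'. \<forall>s\<in>P'. R q r \<longrightarrow> R r s \<longrightarrow> R q s"
          using tr unfolding P'_def by auto
        show ?thesis using Suc.IH[OF finP' r' s' t' cardP' cls] that by blast
      qed
      define g where "g = g'(q := m)"
      have gP': "\<And>t. t \<in> P' \<Longrightarrow> g t = g' t" unfolding g_def P'_def by auto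
      have gq: "g q = m" unfolding g_def by auto
      have Pdec: "\<And>t. t \<in> P \<Longrightarrow> t \<in> P' \<or> t = q" unfolding P'_def by auto
      have "\<forall>t\<in>P. g t < Suc m"
      proof
        fix t assume "t \<in> P"
        then show "g t < Suc m" using Pdec gP' gq g'(1) by (metis less_Suc_eq)
      qed
      moreover have "\<forall>i. card {t\<in>P. g t = i} \<le> 2"
      proof
        fix i
        show "card {t\<in>P. g t = i} \<le> 2"
        proof (cases "i = m")
          case True
          have "{t\<in>P. g t = i} \<subseteq> {q}"
          proof
            fix t assume "t \<in> {t\<in>P. g t = i}"
            then show "t \<in> {q}" using Pdec gP' g'(1) True by (metis (mono_tags, lifting) singletonI less_irrefl mem_Collect_eq)
          qed
          then have "card {t\<in>P. g t = i} \<le> card {q}" by (intro card_mono) auto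
          then show ?thesis by simp
        next
          case False
          have "{t\<in>P. g t = i} \<subseteq> {t\<in>P'. g' t = i}"
          proof
            fix t assume "t \<in> {t\<in>P. g t = i}"
            then show "t \<in> {t\<in>P'. g' t = i}" using Pdec gP' gq False by (metis (mono_tags, lifting) mem_Collect_eq)
          qed
          then have "card {t\<in>P. g t = i} \<le> card {t\<in>P'. g' t = i}" using finP' by (intro card_mono) auto
          then show ?thesis using g'(2) by (meson le_trans)
        qed
      qed
      moreover have "\<forall>t\<in>P. \<forall>u\<in>P. t \<noteq> u \<longrightarrow> g t = g u \<longrightarrow> \<not> R t u"
      proof (intro ballI impI)
        fix t u assume tu: "t \<in> P" "u \<in> P" "t \<noteq> u" "g t = g u"
        show "\<not> R t u"
        proof (cases "t \<in> P' \<and> u \<in> P'")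
          case True
          then show ?thesis using g'(3) gP' tu by metis
        next
          case False
          then have "(t \<in> P' \<and> u = q) \<or> (u \<in> P' \<and> t = q)" using Pdec tu by blast
          then show ?thesis using gP' gq g'(1) tu(4) by (metis less_irrefl)
        qed
      qed
      ultimately show ?thesis by (intro exI[of _ g]) blast
    qed
  qed
qed



lemma card_le2_cases:
  assumes "finite F" "card F \<le> 2"
  shows "F = {} \<or> (\<exists>q. F = {q}) \<or> (\<exists>q r. q \<noteq> r \<and> F = {q, r})"
proof -
  have "card F = 0 \<or> card F = 1 \<or> card F = 2" using assms(2) by auto
  then show ?thesis using assms(1) by (auto simp: card_1_singleton_iff card_2_iff)
qed

lemma gen_neq_mult:
  assumes "p \<in> proj_points" "q \<in> proj_points" "q \<noteq> p"
  shows "\<not> (\<exists>a. gen q = (\<lambda>i. a * gen p i))"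
  using gen_mult_eq assms by blast

lemma cert:
  fixes Z :: "('n::finite \<Rightarrow> complex) set set"
  assumes Z: "Z \<subseteq> proj_points" "finite Z" "p \<in> Z" "card Z \<le> 2 * d + 1"
    and cl: "\<forall>q\<in>Z-{p}. card {r\<in>Z-{p}. in2 (gen p) (gen q) (gen r)} \<le> d"
  shows "\<exists>W. (\<forall>q\<in>Z-{p}. (\<Prod>i<d. lf (W i) (gen q)) = 0) \<and> (\<Prod>i<d. lf (W i) (gen p)) \<noteq> 0"
proof -
  define P where "P = Z - {p}"
  define R where "R q r = in2 (gen p) (gen q) (gen r)" for q r
  have pp: "p \<in> proj_points" using Z by auto
  have finP: "finite P" using Z unfolding P_def by auto
  have PZ: "\<And>q. q \<in> P \<Longrightarrow> q \<in> proj_points \<and> q \<noteq> p" using Z unfolding P_def by auto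
  have rfl: "\<forall>q\<in>P. R q q" unfolding R_def by (simp add: in2_2)
  have sym: "\<forall>q\<in>P. \<forall>r\<in>P. R q r \<longrightarrow> R r q"
    unfolding R_def using in2_sym gen_neq_mult[OF pp] PZ by blast
  have tr: "\<forall>q\<in>P. \<forall>r\<in>P. \<forall>s\<in>P. R q r \<longrightarrow> R r s \<longrightarrow> R q s"
    unfolding R_def using in2_trans by blast
  have cP: "card P \<le> 2 * d" using Z unfolding P_def by simp
  have cC: "\<forall>q\<in>P. card {r\<in>P. R q r} \<le> d" using cl unfolding P_def R_def by blast
  obtain g where g: "\<forall>q\<in>P. g q < d" "\<forall>i. card {q\<in>P. g q = i} \<le> 2"
      "\<forall>q\<in>P. \<forall>r\<in>P. q \<noteq> r \<longrightarrow> g q = g r \<longrightarrow> \<not> R q r"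
    using comb[OF finP rfl sym tr cP cC] by blast
  have "\<forall>i. \<exists>w. (\<forall>s\<in>gen ` {q\<in>P. g q = i}. lf w s = 0) \<and> lf w (gen p) \<noteq> 0"
  proof
    fix i
    define Fi where "Fi = {q\<in>P. g q = i}"
    have finF: "finite Fi" using finP unfolding Fi_def by auto
    have "\<not> lin (gen ` Fi) (gen p)"
    proof
      assume lp: "lin (gen ` Fi) (gen p)"
      have "Fi = {} \<or> (\<exists>q. Fi = {q}) \<or> (\<exists>q r. q \<noteq> r \<and> Fi = {q, r})"
        using card_le2_cases[OF finF] g(2) unfolding Fi_def by blast
      moreover have "Fi \<noteq> {}"
      proof
        assume "Fi = {}"
        then have "gen p = (\<lambda>i. 0)" using lp by (simp add: lin_empty)
        then show False using gen_props(1)[OF pp] by simp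
      qed
      moreover have "\<not> (\<exists>q. Fi = {q})"
      proof
        assume "\<exists>q. Fi = {q}"
        then obtain q where q: "Fi = {q}" by blast
        have "q \<in> Fi" using q by auto
        then have qP: "q \<in> P" unfolding Fi_def by auto
        obtain c where "gen p = (\<lambda>i. \<Sum>v\<in>{gen q}. c v * v i)" using lp q unfolding lin_def by auto
        then have "gen p = (\<lambda>i. c (gen q) * gen q i)" by simp
        then have "p = q" using gen_mult_eq[of p q "c (gen q)"] PZ[OF qP] pp by blast
        then show False using PZ[OF qP] by blast
      qed
      moreover have "\<not> (\<exists>q r. q \<noteq> r \<and> Fi = {q, r})"
      proof
        assume "\<exists>q r. q \<noteq> r \<and> Fi = {q, r}"
        then obtain q r where qr: "q \<noteq> r" "Fi = {q, r}" by blast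
        have "q \<in> Fi" "r \<in> Fi" using qr(2) by auto
        then have qP: "q \<in> P" "r \<in> P" "g q = g r" unfolding Fi_def by auto
        have nR: "\<not> R q r" using g(3) qP qr(1) by blast
        have gqr: "gen q \<noteq> gen r"
        proof
          assume "gen q = gen r"
          then have "gen q = (\<lambda>i. 1 * gen r i)" by simp
          then have "q = r" using gen_mult_eq[of q r 1] PZ qP by blast
          then show False using qr(1) by blast
        qed
        obtain c where "gen p = (\<lambda>i. \<Sum>v\<in>{gen q, gen r}. c v * v i)" using lp qr unfolding lin_def by auto
        then have gp: "gen p = (\<lambda>i. c (gen q) * gen q i + c (gen r) * gen r i)" using gqr by simp
        show False
        proof (cases "c (gen r) = 0")
          case True
          then have "gen p = (\<lambda>i. c (gen q) * gen q i)" using gp by simp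
          then have "p = q" using gen_mult_eq[of p q "c (gen q)"] PZ[OF qP(1)] pp by blast
          then show False using PZ[OF qP(1)] by blast
        next
          case False
          have e: "gen r = (\<lambda>i. (1 / c (gen r)) * gen p i + (- c (gen q) / c (gen r)) * gen q i)"
          proof
            fix i
            show "gen r i = (1 / c (gen r)) * gen p i + (- c (gen q) / c (gen r)) * gen q i"
              using False unfolding gp by (simp add: field_simps)
          qed
          have "R q r" unfolding R_def in2_def
            by (rule exI[of _ "1 / c (gen r)"], rule exI[of _ "- c (gen q) / c (gen r)"]) (rule e)
          then show False using nR by blast
        qed
      qed
      ultimately show False by blast
    qed
    moreover have "finite (gen ` Fi)" using finF by simp
    ultimately show "\<exists>w. (\<forall>s\<in>gen ` {q\<in>P. g q = i}. lf w s = 0) \<and> lf w (gen p) \<noteq> 0"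
      using SEP unfolding Fi_def by blast
  qed
  then have "\<exists>W. \<forall>i. (\<forall>s\<in>gen ` {q\<in>P. g q = i}. lf (W i) s = 0) \<and> lf (W i) (gen p) \<noteq> 0"
    by (rule choice)
  then obtain W where W: "\<forall>i. (\<forall>s\<in>gen ` {q\<in>P. g q = i}. lf (W i) s = 0) \<and> lf (W i) (gen p) \<noteq> 0"
    by blast
  have "\<forall>q\<in>Z-{p}. (\<Prod>i<d. lf (W i) (gen q)) = 0"
  proof
    fix q assume "q \<in> Z - {p}"
    then have qP: "q \<in> P" unfolding P_def by auto
    then have "lf (W (g q)) (gen q) = 0" using W by blast
    moreover have "g q \<in> {..<d}" using g(1) qP by auto
    ultimately show "(\<Prod>i<d. lf (W i) (gen q)) = 0" by (metis (no_types, lifting) finite_lessThan prod_zero_iff)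
  qed
  moreover have "(\<Prod>i<d. lf (W i) (gen p)) \<noteq> 0" using W by (simp add: prod_zero_iff)
  ultimately show ?thesis by (intro exI[of _ W]) blast
qed



lemma cspan2: "(\<lambda>i. s * u i + t * w i) \<in> cspan {u, w}"
proof -
  have "(\<lambda>x. \<Sum>b\<in>{True, False}. (if b then s else t) * (if b then u else w) x) \<in> cspan {u, w}"
    by (rule cspan_sum) auto
  then show ?thesis by simp
qed

lemma aligned_line:
  assumes "S \<subseteq> proj_points" "\<forall>L\<in>S. in2 u w (gen L)"
  shows "aligned S"
proof -
  have H: "\<forall>L\<in>S. L \<subseteq> cspan {u, w}"
  proof (intro ballI subsetI)
  fix L x assume L: "L \<in> S" "x \<in> L"
  then obtain a where x: "x = (\<lambda>i. a * gen L i)" using gen_range[of L] assms(1) by blast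
  obtain s t where g: "gen L = (\<lambda>i. s * u i + t * w i)" using assms(2) L(1) unfolding in2_def by blast
  have "x = (\<lambda>i. (a * s) * u i + (a * t) * w i)" unfolding x g by (simp add: algebra_simps)
  then show "x \<in> cspan {u, w}" using cspan2 by simp
  qed
  show ?thesis unfolding aligned_def by (rule exI[of _ u], rule exI[of _ w], rule H)
qed

lemma sum_single_nonzero:
  fixes c h :: "_ \<Rightarrow> complex"
  assumes "finite A" "\<forall>L\<in>A. L \<noteq> p \<longrightarrow> h L = 0"
  shows "(\<Sum>L\<in>A. c L * h L) = (if p \<in> A then c p * h p else 0)"
proof -
  have "(\<Sum>L\<in>A. c L * h L) = (\<Sum>L\<in>A. if L = p then c L * h L else 0)"
    using assms(2) by (intro sum.cong) auto
  also have "\<dots> = (if p \<in> A then c p * h p else 0)" using assms(1) by (simp add: sum.delta')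
  finally show ?thesis .
qed

lemma core:
  fixes A B :: "('n::finite \<Rightarrow> complex) set set"
  assumes pA: "A \<subseteq> proj_points" "finite A" and pB: "B \<subseteq> proj_points" "finite B"
    and cA: "\<forall>L\<in>A. c L \<noteq> 0" and cB: "\<forall>L\<in>B. e L \<noteq> 0"
    and eq: "(\<lambda>f. \<Sum>L\<in>A. c L * ver d (gen L) f) = (\<lambda>f. \<Sum>L\<in>B. e L * ver d (gen L) f)"
    and cBA: "card B \<le> card A" and cAd: "card A \<le> d"
    and noal: "\<forall>S\<subseteq>A. aligned S \<longrightarrow> 2 * card S < d"
  shows "A = B"
proof -
  define Z where "Z = A \<union> B"
  have finZ: "finite Z" and pZ: "Z \<subseteq> proj_points" using pA pB unfolding Z_def by auto
  have cZ: "card Z \<le> 2 * d"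
  proof -
    have "card Z \<le> card A + card B" unfolding Z_def by (rule card_Un_le)
    then show ?thesis using cBA cAd by simp
  qed
  have good: "p \<in> A \<longleftrightarrow> p \<in> B"
    if pZ': "p \<in> Z" and hyp: "\<forall>q\<in>Z-{p}. card {r\<in>Z-{p}. in2 (gen p) (gen q) (gen r)} \<le> d" for p
  proof -
    obtain W where W: "\<forall>q\<in>Z-{p}. (\<Prod>i<d. lf (W i) (gen q)) = 0" "(\<Prod>i<d. lf (W i) (gen p)) \<noteq> 0"
      using cert[OF pZ finZ pZ' _ hyp] cZ by auto
    define Pv where "Pv L = (\<Prod>i<d. lf (W i) (gen L))" for L
    have z: "\<forall>L\<in>Z. L \<noteq> p \<longrightarrow> Pv L = 0" using W(1) unfolding Pv_def by blast
    have "phi d W (\<lambda>f. \<Sum>L\<in>A. c L * ver d (gen L) f) = (\<Sum>L\<in>A. c L * Pv L)"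
      unfolding phi_sum phi_ver Pv_def ..
    also have "\<dots> = (if p \<in> A then c p * Pv p else 0)"
      using z pA(2) unfolding Z_def by (intro sum_single_nonzero) auto
    finally have l: "phi d W (\<lambda>f. \<Sum>L\<in>A. c L * ver d (gen L) f) = (if p \<in> A then c p * Pv p else 0)" .
    have "phi d W (\<lambda>f. \<Sum>L\<in>B. e L * ver d (gen L) f) = (\<Sum>L\<in>B. e L * Pv L)"
      unfolding phi_sum phi_ver Pv_def ..
    also have "\<dots> = (if p \<in> B then e p * Pv p else 0)"
      using z pB(2) unfolding Z_def by (intro sum_single_nonzero) auto
    finally have r: "phi d W (\<lambda>f. \<Sum>L\<in>B. e L * ver d (gen L) f) = (if p \<in> B then e p * Pv p else 0)" .
    have "(if p \<in> A then c p * Pv p else 0) = (if p \<in> B then e p * Pv p else 0)"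
      using l r eq by simp
    moreover have "Pv p \<noteq> 0" using W(2) unfolding Pv_def .
    ultimately show ?thesis using cA cB by (auto split: if_splits)
  qed
  show "A = B"
  proof (rule ccontr)
    assume "A \<noteq> B"
    then obtain p0 where p0: "p0 \<in> Z" "\<not> (p0 \<in> A \<longleftrightarrow> p0 \<in> B)" unfolding Z_def by blast
    then obtain q0 where q0: "q0 \<in> Z - {p0}" "card {r\<in>Z-{p0}. in2 (gen p0) (gen q0) (gen r)} > d"
      using good by force
    define K0 where "K0 = {r\<in>Z-{p0}. in2 (gen p0) (gen q0) (gen r)}"
    define Ls where "Ls = {r\<in>Z. in2 (gen p0) (gen q0) (gen r)}"
    have finLs: "finite Ls" using finZ unfolding Ls_def by auto
    have "insert p0 K0 \<subseteq> Ls" using p0(1) in2_1 unfolding K0_def Ls_def by auto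
    then have "card (insert p0 K0) \<le> card Ls" using finLs by (rule card_mono[rotated])
    moreover have "card (insert p0 K0) = Suc (card K0)"
      using finZ unfolding K0_def by (intro card_insert_disjoint) auto
    ultimately have cLs: "card Ls \<ge> d + 2" using q0(2) unfolding K0_def by simp
    have LsZ: "Ls \<subseteq> Z" unfolding Ls_def by auto
    have offL: "p \<in> A \<longleftrightarrow> p \<in> B" if pZ': "p \<in> Z" "p \<notin> Ls" for p
    proof (rule good[OF pZ'(1)], intro ballI)
      fix q assume q: "q \<in> Z - {p}"
      define M where "M = {r\<in>Z. in2 (gen p) (gen q) (gen r)}"
      have finM: "finite M" using finZ unfolding M_def by auto
      have pp: "p \<in> proj_points" using pZ'(1) pZ by auto
      have MLs: "card (M \<inter> Ls) \<le> 1"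
      proof -
        have "\<forall>r1\<in>M \<inter> Ls. \<forall>r2\<in>M \<inter> Ls. r1 = r2"
        proof (intro ballI, rule ccontr)
          fix r1 r2 assume r: "r1 \<in> M \<inter> Ls" "r2 \<in> M \<inter> Ls" "r1 \<noteq> r2"
          have rp: "r1 \<in> proj_points" "r2 \<in> proj_points" using r pZ unfolding M_def by auto
          have "in2 (gen r1) (gen r2) (gen p)"
          proof (rule in2_two)
            show "in2 (gen p) (gen q) (gen r1)" "in2 (gen p) (gen q) (gen r2)" using r unfolding M_def by auto
            show "gen r1 \<noteq> (\<lambda>_. 0)" using gen_props(1) rp by blast
            show "\<not> (\<exists>a. gen r2 = (\<lambda>i. a * gen r1 i))" using gen_neq_mult[OF rp(1) rp(2)] r(3) by blast
          qed
          moreover have "in2 (gen p0) (gen q0) (gen r1)" "in2 (gen p0) (gen q0) (gen r2)"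
            using r unfolding Ls_def by auto
          ultimately have "in2 (gen p0) (gen q0) (gen p)" using in2_sub by blast
          then have "p \<in> Ls" using pZ'(1) unfolding Ls_def by auto
          then show False using pZ'(2) by blast
        qed
        then show ?thesis using finM by (simp add: card_le_Suc0_iff_eq)
      qed
      have "card M + card Ls = card (M \<union> Ls) + card (M \<inter> Ls)"
        using finM finLs by (rule card_Un_Int)
      moreover have "card (M \<union> Ls) \<le> card Z" using finZ LsZ unfolding M_def by (intro card_mono) auto
      ultimately have cM: "card M + 1 \<le> d" using MLs cLs cZ by linarith
      have "{r\<in>Z-{p}. in2 (gen p) (gen q) (gen r)} \<subseteq> M" unfolding M_def by auto
      then have "card {r\<in>Z-{p}. in2 (gen p) (gen q) (gen r)} \<le> card M" using finM by (rule card_mono[rotated])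
      then show "card {r\<in>Z-{p}. in2 (gen p) (gen q) (gen r)} \<le> d" using cM by linarith
    qed
    have AB: "A - Ls = B - Ls" using offL unfolding Z_def by blast
    have cAs: "card A = card (A \<inter> Ls) + card (A - Ls)"
      using pA(2) by (metis card_Int_Diff)
    have cBs: "card B = card (B \<inter> Ls) + card (B - Ls)"
      using pB(2) by (metis card_Int_Diff)
    have "card (A - Ls) = card (B - Ls)" using AB by simp
    then have c1: "card (B \<inter> Ls) \<le> card (A \<inter> Ls)" using cAs cBs cBA by linarith
    have "Ls = (A \<inter> Ls) \<union> (B \<inter> Ls)" using LsZ unfolding Z_def by auto
    then have "card Ls \<le> card (A \<inter> Ls) + card (B \<inter> Ls)" by (metis card_Un_le)
    moreover have "aligned (A \<inter> Ls)"
      by (rule aligned_line[of _ "gen p0" "gen q0"]) (use pA in \<open>auto simp: Ls_def\<close>)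
    then have "2 * card (A \<inter> Ls) < d" using noal by blast
    ultimately show False using c1 cLs by linarith
  qed
qed


theorem mainTheorem4:
  fixes d :: nat and T :: "(nat \<Rightarrow> 'n::finite) \<Rightarrow> complex"
    and A :: "('n \<Rightarrow> complex) set set"
  assumes "T \<noteq> (\<lambda>_. 0)"
    and "minimal_decomposition d T A"
    and "card A \<le> d"
    and "\<not> (\<exists>S\<subseteq>A. aligned S \<and> 2 * card S \<ge> d)"
  shows "tensor_rank d T = card A \<and> identifiable d T"
proof -
  have decA: "is_decomposition d T A" using assms(2) unfolding minimal_decomposition_def by blast
  then have finA: "finite A" and pA: "A \<subseteq> proj_points" and TA: "T \<in> ver_span d A"
    unfolding is_decomposition_def by auto
  obtain c where c: "T = (\<lambda>f. \<Sum>L\<in>A. c L * ver d (gen L) f)"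
    using normal_form[OF finA pA TA] by blast
  have cA: "\<forall>L\<in>A. c L \<noteq> 0" using coef_nonzero[OF assms(2) c] by blast
  have noal: "\<forall>S\<subseteq>A. aligned S \<longrightarrow> 2 * card S < d" using assms(4) by auto
  have key: "B = A" if B: "is_decomposition d T B" "card B \<le> card A" for B
  proof -
    obtain B' where B': "B' \<subseteq> B" "minimal_decomposition d T B'" using exmin[OF B(1)] by blast
    have finB: "finite B" using B(1) unfolding is_decomposition_def by auto
    have decB': "is_decomposition d T B'" using B'(2) unfolding minimal_decomposition_def by blast
    then have finB': "finite B'" and pB': "B' \<subseteq> proj_points" and TB': "T \<in> ver_span d B'"
      unfolding is_decomposition_def by auto
    obtain e where e: "T = (\<lambda>f. \<Sum>L\<in>B'. e L * ver d (gen L) f)"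
      using normal_form[OF finB' pB' TB'] by blast
    have eB: "\<forall>L\<in>B'. e L \<noteq> 0" using coef_nonzero[OF B'(2) e] by blast
    have "card B' \<le> card B" using B'(1) finB by (rule card_mono[rotated])
    then have cB': "card B' \<le> card A" using B(2) by linarith
    have "A = B'"
      using core[OF pA finA pB' finB' cA eB _ cB' assms(3) noal] c e by simp
    then have "A \<subseteq> B" using B'(1) by simp
    moreover have "card A \<le> card B" using \<open>A \<subseteq> B\<close> finB by (rule card_mono[rotated])
    ultimately show "B = A" using finB B(2) by (metis card_subset_eq le_antisym)
  qed
  have rank: "tensor_rank d T = card A"
    unfolding tensor_rank_def
  proof (rule Least_equality)
    show "\<exists>B. is_decomposition d T B \<and> card B = card A" using decA by blast
  next
    fix r assume "\<exists>B. is_decomposition d T B \<and> card B = r"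
    then obtain B where B: "is_decomposition d T B" "card B = r" by blast
    show "card A \<le> r"
    proof (rule ccontr)
      assume "\<not> card A \<le> r"
      then have "B = A" using key B by simp
      then show False using B \<open>\<not> card A \<le> r\<close> by simp
    qed
  qed
  have "identifiable d T"
    unfolding identifiable_def rank
  proof (rule ex1I[of _ A])
    show "is_decomposition d T A \<and> card A = card A" using decA by simp
  next
    fix B assume "is_decomposition d T B \<and> card B = card A"
    then show "B = A" using key by simp
  qed
  then show ?thesis using rank by simp
qed

end
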